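(* Let $\tau\subset\mathbb{Z}^4_{\ge0}$ be a B-facet which has a $1$-dimensional V-face $F$ that is not a B-face. Then $\tau$ is a $B_1$-facet, or a $B_2$-facet, or a flat border.
   Context: A polytope is a finite subset of $\mathbb{Z}^n$; its dimension is the dimension of its affine span; a face of a finite set $S$ is $S\cap G$ for a face $G$ of the convex hull of $S$. A $k$-simplex is a set of $k+1$ affinely independent points; a $k$-simplex $S\subset\mathbb{Z}^m_{\ge0}$ is a B-simplex if there is an index $i$ with exactly $k$ vertices in $\{x_i=0\}$ and the remaining vertex having $x_i=1$. A B-facet in $\mathbb{Z}^n_{\ge0}$ is a finite set $\tau\subset\mathbb{Z}^n_{\ge0}$ whose affine span is a hyperplane $\{\langle a,x\rangle=b\}$ with all $a_j>0$, such that every $(n-1)$-simplex with vertices in $\tau$ is a B-simplex. A face $F$ of $\tau$ is a V-face if it is contained in a coordinate subspace $E$ (linear span of some standard basis vectors) with $\dim E=\dim F+1$; such $F$ is a B-face if every $(\dim F)$-simplex with vertices in $F$ is a B-simplex when regarded as a subset of $\mathbb{Z}^{E}_{\ge0}\cong\mathbb{Z}^{\dim E}_{\ge0}$ (using only the coordinates of $E$). For $\tau\subset\mathbb{Z}^4_{\ge0}$: $\tau$ is a $B_1$-facet if for some $i$ exactly one point has nonzero $x_i$, with $x_i=1$; a $B_2$-facet if for some distinct $i,j$ all $x\in\tau$ have $(x_i,x_j)\in\{(0,0),(1,0),(0,1)\}$; a flat border if there are distinct $i,j$ and $C\in\tau$ with $C_i=C_j=1$ such that $\tau$ contains at least two distinct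 points with $x_i=x_j=0$ and every point of $\tau$ other than $C$ lies in $\{x_i=0\}\cup\{x_j=0\}$. *)

theory Defs
  imports "HOL-Analysis.Analysis"
begin

text \<open>Lattice points of Z^4_{>=0} are represented as points of real^4 all of whose
  coordinates are nonnegative integers.\<close>

type_synonym pt = "real ^ 4"

definition lattice_nonneg :: "pt \<Rightarrow> bool" where
  "lattice_nonneg x \<longleftrightarrow> (\<forall>i. x $ i \<in> \<int> \<and> x $ i \<ge> 0)"

definition is_simplex :: "nat \<Rightarrow> pt set \<Rightarrow> bool" where
  "is_simplex k S \<longleftrightarrow> finite S \<and> card S = k + 1 \<and> \<not> affine_dependent S"

text \<open>B-simplex condition, with the distinguished index ranging over the coordinate
  index set I (I = UNIV for the ambient space, I = the index set of E for a coordinate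
  subspace E): exactly one vertex has x_i nonzero, and it has x_i = 1 (so the other
  k vertices lie in x_i = 0).\<close>
definition is_B_simplex_on :: "4 set \<Rightarrow> nat \<Rightarrow> pt set \<Rightarrow> bool" where
  "is_B_simplex_on I k S \<longleftrightarrow> is_simplex k S \<and>
     (\<exists>i\<in>I. \<exists>v\<in>S. v $ i = 1 \<and> (\<forall>w\<in>S. w \<noteq> v \<longrightarrow> w $ i = 0))"

definition is_B_facet :: "pt set \<Rightarrow> bool" where
  "is_B_facet \<tau> \<longleftrightarrow> finite \<tau> \<and> (\<forall>x\<in>\<tau>. lattice_nonneg x) \<and>
     (\<exists>a b. (\<forall>j. a $ j > 0) \<and> affine hull \<tau> = {x. a \<bullet> x = b}) \<and>
     (\<forall>S. S \<subseteq> \<tau> \<and> is_simplex 3 S \<longrightarrow> is_B_simplex_on UNIV 3 S)"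

definition face_of_set :: "pt set \<Rightarrow> pt set \<Rightarrow> bool" where
  "face_of_set \<tau> F \<longleftrightarrow> (\<exists>G. G face_of convex hull \<tau> \<and> F = \<tau> \<inter> G)"

definition coord_subspace :: "4 set \<Rightarrow> pt set" where
  "coord_subspace I = span ((\<lambda>i. axis i (1::real)) ` I)"

definition V_face_wrt :: "pt set \<Rightarrow> pt set \<Rightarrow> 4 set \<Rightarrow> bool" where
  "V_face_wrt \<tau> F I \<longleftrightarrow> face_of_set \<tau> F \<and> F \<subseteq> coord_subspace I \<and>
     int (dim (coord_subspace I)) = aff_dim F + 1"

definition is_V_face :: "pt set \<Rightarrow> pt set \<Rightarrow> bool" where
  "is_V_face \<tau> F \<longleftrightarrow> (\<exists>I. V_face_wrt \<tau> F I)"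

definition is_B_face :: "pt set \<Rightarrow> pt set \<Rightarrow> bool" where
  "is_B_face \<tau> F \<longleftrightarrow> (\<exists>I. V_face_wrt \<tau> F I \<and>
     (\<forall>S. S \<subseteq> F \<and> is_simplex (nat (aff_dim F)) S \<longrightarrow>
          is_B_simplex_on I (nat (aff_dim F)) S))"

definition is_B1_facet :: "pt set \<Rightarrow> bool" where
  "is_B1_facet \<tau> \<longleftrightarrow> (\<exists>i. \<exists>p\<in>\<tau>. p $ i = 1 \<and> (\<forall>q\<in>\<tau>. q \<noteq> p \<longrightarrow> q $ i = 0))"

definition is_B2_facet :: "pt set \<Rightarrow> bool" where
  "is_B2_facet \<tau> \<longleftrightarrow> (\<exists>i j. i \<noteq> j \<and>
     (\<forall>x\<in>\<tau>. (x $ i, x $ j) \<in> {(0,0),(1,0),(0,1)}))"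

definition is_flat_border :: "pt set \<Rightarrow> bool" where
  "is_flat_border \<tau> \<longleftrightarrow> (\<exists>i j C. i \<noteq> j \<and> C \<in> \<tau> \<and> C $ i = 1 \<and> C $ j = 1 \<and>
     (\<exists>p\<in>\<tau>. \<exists>q\<in>\<tau>. p \<noteq> q \<and> p $ i = 0 \<and> p $ j = 0 \<and> q $ i = 0 \<and> q $ j = 0) \<and>
     (\<forall>x\<in>\<tau>. x \<noteq> C \<longrightarrow> x $ i = 0 \<or> x $ j = 0))"

end

theory Submission
  imports Defs
begin


lemma univ4:
  fixes i j k l :: 4
  assumes "i\<noteq>j" "i\<noteq>k" "i\<noteq>l" "j\<noteq>k" "j\<noteq>l" "k\<noteq>l"
  shows "(UNIV::4 set) = {i,j,k,l}"
proof -
  have "card {i,j,k,l} = 4" using assms by simp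
  hence "card {i,j,k,l} = card (UNIV::4 set)" by simp
  thus "(UNIV::4 set) = {i,j,k,l}" by (metis card_subset_eq finite subset_UNIV)
qed

definition cfg :: "(real^4) set \<Rightarrow> real^4 \<Rightarrow> real \<Rightarrow> 4 \<Rightarrow> 4 \<Rightarrow> 4 \<Rightarrow> 4 \<Rightarrow> real^4 \<Rightarrow> real^4 \<Rightarrow> bool" where
"cfg \<tau> a b i j k l p q \<longleftrightarrow> i\<noteq>j \<and> i\<noteq>k \<and> i\<noteq>l \<and> j\<noteq>k \<and> j\<noteq>l \<and> k\<noteq>l \<and>
 (\<forall>x\<in>\<tau>. \<forall>m. x$m \<ge> 0) \<and> (\<forall>m. a$m > 0) \<and>
 (\<forall>x\<in>\<tau>. a$i*x$i + a$j*x$j + a$k*x$k + a$l*x$l = b) \<and>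
 (\<forall>S. S \<subseteq> \<tau> \<and> is_simplex 3 S \<longrightarrow> is_B_simplex_on UNIV 3 S) \<and>
 p\<in>\<tau> \<and> q\<in>\<tau> \<and> p\<noteq>q \<and> p$k=0 \<and> p$l=0 \<and> q$k=0 \<and> q$l=0 \<and>
 (\<forall>m\<in>{i,j}. \<not>(p$m=1 \<and> q$m=0) \<and> \<not>(p$m=0 \<and> q$m=1))"

lemma cfg_swap_kl: "cfg \<tau> a b i j k l p q \<Longrightarrow> cfg \<tau> a b i j l k p q"
  unfolding cfg_def by (auto simp: ac_simps)

lemma cfg_swap_ij: "cfg \<tau> a b i j k l p q \<Longrightarrow> cfg \<tau> a b j i k l p q"
  unfolding cfg_def by (auto simp: ac_simps)

lemma cfg_univ: "cfg \<tau> a b i j k l p q \<Longrightarrow> (UNIV::4 set) = {i,j,k,l}"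
  unfolding cfg_def by (intro univ4) auto

lemma L_agree_i:
  assumes c: "cfg \<tau> a b i j k l p q" and x: "x\<in>\<tau>" and y: "y\<in>\<tau>"
    and "x$k=y$k" "x$l=y$l" "x$i=y$i"
  shows "x = y"
proof -
  have ex: "a$i*x$i + a$j*x$j + a$k*x$k + a$l*x$l = b" and ey: "a$i*y$i + a$j*y$j + a$k*y$k + a$l*y$l = b"
    using c x y unfolding cfg_def by auto
  have ex': "a$i*y$i + a$j*x$j + a$k*y$k + a$l*y$l = b" using ex assms(4-6) by simp
  have "a$j*x$j = a$j*y$j" using ex' ey by linarith
  moreover have "a$j > 0" using c unfolding cfg_def by auto
  ultimately have "x$j = y$j" by simp
  moreover have "(UNIV::4 set) = {i,j,k,l}" using cfg_univ[OF c] .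
  moreover note assms(4-6)
  ultimately show ?thesis unfolding vec_eq_iff
  proof (intro allI)
    fix m
    have "m \<in> {i,j,k,l}" using cfg_univ[OF c] by auto
    thus "x$m = y$m" using \<open>x$j = y$j\<close> assms(4-6) by auto
  qed
qed

lemma L_agree_j:
  assumes c: "cfg \<tau> a b i j k l p q" and x: "x\<in>\<tau>" and y: "y\<in>\<tau>"
    and "x$k=y$k" "x$l=y$l" "x$j=y$j"
  shows "x = y"
  using L_agree_i[OF cfg_swap_ij[OF c] x y] assms by blast

lemma L_B4:
  assumes c: "cfg \<tau> a b i j k l p q" and w: "w1\<in>\<tau>" "w2\<in>\<tau>" "w3\<in>\<tau>" "w4\<in>\<tau>"
    and d: "distinct [w1,w2,w3,w4]" and ai: "\<not> affine_dependent {w1,w2,w3,w4}"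
  shows "\<exists>m. (w1$m=1 \<and> w2$m=0 \<and> w3$m=0 \<and> w4$m=0) \<or> (w1$m=0 \<and> w2$m=1 \<and> w3$m=0 \<and> w4$m=0)
     \<or> (w1$m=0 \<and> w2$m=0 \<and> w3$m=1 \<and> w4$m=0) \<or> (w1$m=0 \<and> w2$m=0 \<and> w3$m=0 \<and> w4$m=1)"
proof -
  have "is_simplex 3 {w1,w2,w3,w4}" unfolding is_simplex_def using d ai by auto
  moreover have "{w1,w2,w3,w4} \<subseteq> \<tau>" using w by auto
  ultimately have "is_B_simplex_on UNIV 3 {w1,w2,w3,w4}" using c unfolding cfg_def by blast
  then obtain m v where v: "v \<in> {w1,w2,w3,w4}" "v$m = 1" "\<forall>w\<in>{w1,w2,w3,w4}. w \<noteq> v \<longrightarrow> w$m = 0"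
    unfolding is_B_simplex_on_def by blast
  show ?thesis using v d by (auto intro!: exI[of _ m])
qed

lemma L_AI:
  fixes x y z w :: "real^4"
  assumes xy: "x \<noteq> y" and ek: "x$k = y$k" and el: "x$l = y$l"
    and D: "(z$k-x$k)*(w$l-x$l) - (z$l-x$l)*(w$k-x$k) \<noteq> 0"
  shows "distinct [x,y,z,w] \<and> \<not> affine_dependent {x,y,z,w}"
proof -
  have zx: "z \<noteq> x" using D by auto
  have zy: "z \<noteq> y" using D ek el by auto
  have wx: "w \<noteq> x" using D by auto
  have wy: "w \<noteq> y" using D ek el by auto
  have zw: "z \<noteq> w" using D by (auto simp: algebra_simps)
  have dist: "distinct [x,y,z,w]" using xy zx zy wx wy zw by auto
  have "\<not> affine_dependent {x,y,z,w}"
  proof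
    assume "affine_dependent {x,y,z,w}"
    then obtain U where U: "sum U {x,y,z,w} = 0" "\<exists>v\<in>{x,y,z,w}. U v \<noteq> 0"
        "(\<Sum>v\<in>{x,y,z,w}. U v *\<^sub>R v) = 0"
      using affine_dependent_explicit_finite[of "{x,y,z,w}"] by auto
    have s: "U x + U y + U z + U w = 0" using U(1) dist by simp
    have v: "U x *\<^sub>R x + U y *\<^sub>R y + U z *\<^sub>R z + U w *\<^sub>R w = 0" using U(3) dist by (simp add: algebra_simps)
    have vk: "U x * x$k + U y * y$k + U z * z$k + U w * w$k = 0"
      using arg_cong[OF v, of "\<lambda>v. v$k"] by simp
    have vl: "U x * x$l + U y * y$l + U z * z$l + U w * w$l = 0"
      using arg_cong[OF v, of "\<lambda>v. v$l"] by simp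
    define A1 where "A1 = z$k-x$k"
    define B1 where "B1 = w$k-x$k"
    define A2 where "A2 = z$l-x$l"
    define B2 where "B2 = w$l-x$l"
    have e1: "U z * A1 + U w * B1 = 0"
    proof -
      have "U z * A1 + U w * B1 = (U x * x$k + U y * y$k + U z * z$k + U w * w$k) - x$k * (U x + U y + U z + U w)"
        unfolding A1_def B1_def using ek by (simp add: algebra_simps)
      thus ?thesis using vk s by simp
    qed
    have e2: "U z * A2 + U w * B2 = 0"
    proof -
      have "U z * A2 + U w * B2 = (U x * x$l + U y * y$l + U z * z$l + U w * w$l) - x$l * (U x + U y + U z + U w)"
        unfolding A2_def B2_def using el by (simp add: algebra_simps)
      thus ?thesis using vl s by simp
    qed
    have DD: "A1*B2 - A2*B1 \<noteq> 0" using D unfolding A1_def B1_def A2_def B2_def .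
    have "U z * (A1*B2 - A2*B1) = B2*(U z * A1 + U w * B1) - B1*(U z * A2 + U w * B2)"
      by (simp add: algebra_simps)
    hence "U z * (A1*B2 - A2*B1) = 0" using e1 e2 by simp
    hence z0: "U z = 0" using DD by simp
    have "U w * (A1*B2 - A2*B1) = A1*(U z * A2 + U w * B2) - A2*(U z * A1 + U w * B1)"
      by (simp add: algebra_simps)
    hence "U w * (A1*B2 - A2*B1) = 0" using e1 e2 by simp
    hence w0: "U w = 0" using DD by simp
    have yx: "U y = - U x" using s z0 w0 by simp
    have "U x *\<^sub>R (x - y) = 0" using v z0 w0 yx by (simp add: algebra_simps)
    hence x0: "U x = 0" using xy by simp
    show False using U(2) x0 yx z0 w0 by auto
  qed
  thus ?thesis using dist by simp
qed



lemma L_star: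
  assumes c: "cfg \<tau> a b i j k l p q" and r: "r\<in>\<tau>" and s: "s\<in>\<tau>"
    and D: "r$k* s$l - r$l* s$k \<noteq> 0"
  shows "(r$k=1 \<and> s$k=0) \<or> (r$k=0 \<and> s$k=1) \<or> (r$l=1 \<and> s$l=0) \<or> (r$l=0 \<and> s$l=1)"
proof -
  have cc: "p\<in>\<tau>" "q\<in>\<tau>" "p\<noteq>q" "p$k=0" "p$l=0" "q$k=0" "q$l=0"
     "\<not>(p$i=1 \<and> q$i=0)" "\<not>(p$i=0 \<and> q$i=1)" "\<not>(p$j=1 \<and> q$j=0)" "\<not>(p$j=0 \<and> q$j=1)"
    using c unfolding cfg_def by auto
  have ai: "p$i = 0 \<Longrightarrow> q$i = 0 \<Longrightarrow> False" using L_agree_i[OF c cc(1,2)] cc by auto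
  have aj: "p$j = 0 \<Longrightarrow> q$j = 0 \<Longrightarrow> False" using L_agree_j[OF c cc(1,2)] cc by auto
  have "distinct [p,q,r,s] \<and> \<not> affine_dependent {p,q,r,s}"
    using L_AI[of p q k l r s] cc D by simp
  then obtain m where m: "(p$m=1 \<and> q$m=0 \<and> r$m=0 \<and> s$m=0) \<or> (p$m=0 \<and> q$m=1 \<and> r$m=0 \<and> s$m=0)
     \<or> (p$m=0 \<and> q$m=0 \<and> r$m=1 \<and> s$m=0) \<or> (p$m=0 \<and> q$m=0 \<and> r$m=0 \<and> s$m=1)"
    using L_B4[OF c cc(1,2) r s] by blast
  have "m = i \<or> m = j \<or> m = k \<or> m = l" using cfg_univ[OF c] by auto
  thus ?thesis using m cc ai aj by auto
qed

lemma L_XS: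
  assumes c: "cfg \<tau> a b i j k l p q" and f: "f\<in>\<tau>" "f$k=0" "f$l=0"
    and r: "r1\<in>\<tau>" "r2\<in>\<tau>" "s\<in>\<tau>" "r1\<noteq>r2" "r1$k=r2$k" "r1$l=r2$l"
    and D: "r1$k* s$l - r1$l* s$k \<noteq> 0"
    and nk: "\<not>(s$k=1 \<and> r1$k=0)" and nl: "\<not>(s$l=1 \<and> r1$l=0)"
  shows "\<exists>m. (m=i \<or> m=j) \<and> f$m=0 \<and> s$m=0 \<and> ((r1$m=1 \<and> r2$m=0) \<or> (r1$m=0 \<and> r2$m=1))"
proof -
  have ai: "r1$i = r2$i \<Longrightarrow> False" using L_agree_i[OF c r(1,2)] r by auto
  have aj: "r1$j = r2$j \<Longrightarrow> False" using L_agree_j[OF c r(1,2)] r by auto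
  have "(f$k - r1$k)*(s$l-r1$l) - (f$l-r1$l)*(s$k-r1$k) = -(r1$k* s$l - r1$l* s$k)"
    using f by (simp add: algebra_simps)
  hence "distinct [r1,r2,f,s] \<and> \<not> affine_dependent {r1,r2,f,s}"
    using L_AI[of r1 r2 k l f s] r D by simp
  then obtain m where m: "(r1$m=1 \<and> r2$m=0 \<and> f$m=0 \<and> s$m=0) \<or> (r1$m=0 \<and> r2$m=1 \<and> f$m=0 \<and> s$m=0)
     \<or> (r1$m=0 \<and> r2$m=0 \<and> f$m=1 \<and> s$m=0) \<or> (r1$m=0 \<and> r2$m=0 \<and> f$m=0 \<and> s$m=1)"
    using L_B4[OF c r(1,2) f(1) r(3)] by blast
  have "m = i \<or> m = j \<or> m = k \<or> m = l" using cfg_univ[OF c] by auto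
  thus ?thesis
  proof (elim disjE)
    assume "m = i" thus ?thesis using m ai by auto
  next
    assume "m = j" thus ?thesis using m aj by auto
  next
    assume "m = k" thus ?thesis using m f r nk by auto
  next
    assume "m = l" thus ?thesis using m f r nl by auto
  qed
qed

lemma L_X:
  assumes c: "cfg \<tau> a b i j k l p q"
    and r: "r1\<in>\<tau>" "r2\<in>\<tau>" "s\<in>\<tau>" "r1\<noteq>r2" "r1$k=r2$k" "r1$l=r2$l"
    and D: "r1$k* s$l - r1$l* s$k \<noteq> 0"
    and nk: "\<not>(s$k=1 \<and> r1$k=0)" and nl: "\<not>(s$l=1 \<and> r1$l=0)"
  shows "s$i=0 \<and> s$j=0 \<and> ((r1$i=1 \<and> r2$i=0) \<or> (r1$i=0 \<and> r2$i=1)) \<and> (p$i=0 \<or> q$i=0)"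
proof -
  have cc: "p\<in>\<tau>" "q\<in>\<tau>" "p\<noteq>q" "p$k=0" "p$l=0" "q$k=0" "q$l=0" "i\<noteq>j"
    using c unfolding cfg_def by auto
  have ai: "p$i = 0 \<Longrightarrow> q$i = 0 \<Longrightarrow> False" using L_agree_i[OF c cc(1,2)] cc by auto
  have aj: "p$j = 0 \<Longrightarrow> q$j = 0 \<Longrightarrow> False" using L_agree_j[OF c cc(1,2)] cc by auto
  obtain m where m: "(m=i \<or> m=j)" "p$m=0" "s$m=0" "((r1$m=1 \<and> r2$m=0) \<or> (r1$m=0 \<and> r2$m=1))"
    using L_XS[OF c cc(1) cc(4,5) r D nk nl] by blast
  obtain m' where m': "(m'=i \<or> m'=j)" "q$m'=0" "s$m'=0" "((r1$m'=1 \<and> r2$m'=0) \<or> (r1$m'=0 \<and> r2$m'=1))"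
    using L_XS[OF c cc(2) cc(6,7) r D nk nl] by blast
  have "m \<noteq> m'" using m m' ai aj by auto
  hence "(m = i \<and> m' = j) \<or> (m = j \<and> m' = i)" using m(1) m'(1) by auto
  thus ?thesis using m m' by auto
qed

lemma L_Y:
  assumes c: "cfg \<tau> a b i j k l p q" and s: "s\<in>\<tau>" "s$k=0" "s$l\<noteq>0" "\<not>(s$l=1 \<and> e=0)"
    and x0: "x0\<in>\<tau>" "x0$k\<noteq>0"
    and P: "\<forall>x\<in>\<tau>. x$k\<noteq>0 \<longrightarrow> x$k=1 \<and> x$l=e"
  shows "is_B1_facet \<tau> \<or> is_flat_border \<tau>"
proof (cases "\<forall>y\<in>\<tau>. y\<noteq>x0 \<longrightarrow> y$k=0")
  case True
  have "x0$k = 1" using P x0 by auto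
  hence "is_B1_facet \<tau>" unfolding is_B1_facet_def using True x0 by blast
  thus ?thesis by simp
next
  case False
  then obtain y where y: "y\<in>\<tau>" "y\<noteq>x0" "y$k\<noteq>0" by blast
  have cc: "p\<in>\<tau>" "q\<in>\<tau>" "p\<noteq>q" "p$k=0" "p$l=0" "q$k=0" "q$l=0" "i\<noteq>k"
    using c unfolding cfg_def by auto
  have XX: "s$i=0 \<and> s$j=0 \<and> ((z1$i=1 \<and> z2$i=0) \<or> (z1$i=0 \<and> z2$i=1)) \<and> (p$i=0 \<or> q$i=0)"
    if z: "z1\<in>\<tau>" "z2\<in>\<tau>" "z1\<noteq>z2" "z1$k\<noteq>0" "z2$k\<noteq>0" for z1 z2
  proof -
    have z1: "z1$k=1" "z1$l=e" and z2: "z2$k=1" "z2$l=e" using P z by auto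
    show ?thesis
      by (rule L_X[OF c z(1,2) s(1) z(3)]) (use z1 z2 s in auto)
  qed
  obtain C where C: "C\<in>\<tau>" "C$i=1" "C$k\<noteq>0" using XX[OF x0(1) y(1) y(2)[symmetric] x0(2) y(3)] x0 y by blast
  have Ck: "C$k = 1" using P C by auto
  have si: "s$i = 0" and pq: "p$i=0 \<or> q$i=0" using XX[OF x0(1) y(1) y(2)[symmetric] x0(2) y(3)] by auto
  obtain p' where p': "p'\<in>\<tau>" "p'$i=0" "p'$k=0" "p'$l=0" using pq cc by blast
  have sp: "s \<noteq> p'" using p' s by auto
  have all: "\<forall>x\<in>\<tau>. x\<noteq>C \<longrightarrow> x$i=0 \<or> x$k=0"
  proof (intro ballI impI)
    fix x assume x: "x\<in>\<tau>" "x\<noteq>C"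
    show "x$i=0 \<or> x$k=0"
    proof (cases "x$k = 0")
      case False
      thus ?thesis using XX[OF C(1) x(1) x(2)[symmetric] C(3) False] C(2) by auto
    qed simp
  qed
  have "is_flat_border \<tau>" unfolding is_flat_border_def
    apply (rule exI[of _ i], rule exI[of _ k], rule exI[of _ C])
    using cc C Ck all s si p' sp by blast
  thus ?thesis by simp
qed



lemma L_core:
  assumes c: "cfg \<tau> a b i j k l p q" and r0: "r0\<in>\<tau>" and s0: "s0\<in>\<tau>"
    and D0: "r0$k * s0$l - r0$l * s0$k \<noteq> 0"
  shows "is_B1_facet \<tau> \<or> is_B2_facet \<tau> \<or> is_flat_border \<tau>"
proof -
  have c': "cfg \<tau> a b i j l k p q" using cfg_swap_kl[OF c] .
  have cc: "p\<in>\<tau>" "q\<in>\<tau>" "p\<noteq>q" "p$k=0" "p$l=0" "q$k=0" "q$l=0" "k\<noteq>l"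
    "\<forall>x\<in>\<tau>. \<forall>m. x$m \<ge> 0" "\<forall>m. a$m > 0" "\<forall>x\<in>\<tau>. a$i*x$i + a$j*x$j + a$k*x$k + a$l*x$l = b"
    using c unfolding cfg_def by auto
  note star = L_star[OF c]
  show ?thesis
  proof (cases "\<exists>C\<in>\<tau>. C$k\<noteq>0 \<and> C$l\<noteq>0")
    case True
    then obtain C where C: "C\<in>\<tau>" "C$k\<noteq>0" "C$l\<noteq>0" by blast
    have M1: "x$k * C$l - x$l * C$k = 0" if x: "x\<in>\<tau>" "x$k\<noteq>0" "x$l\<noteq>0" for x
    proof (rule ccontr)
      assume "x$k * C$l - x$l * C$k \<noteq> 0"
      from star[OF x(1) C(1) this] show False using x C by auto
    qed
    obtain s where s: "s\<in>\<tau>" "C$k * s$l - C$l * s$k \<noteq> 0"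
    proof -
      have "C$k * (r0$k * s0$l - r0$l * s0$k) = r0$k*(C$k * s0$l - C$l * s0$k) - s0$k*(C$k * r0$l - C$l * r0$k)"
        by (simp add: algebra_simps)
      hence "C$k * s0$l - C$l * s0$k \<noteq> 0 \<or> C$k * r0$l - C$l * r0$k \<noteq> 0" using D0 C by auto
      thus ?thesis using that r0 s0 by blast
    qed
    have skl: "s$k = 0 \<or> s$l = 0"
    proof (rule ccontr)
      assume "\<not> (s$k = 0 \<or> s$l = 0)"
      hence "s$k * C$l - s$l * C$k = 0" using M1 s by auto
      thus False using s(2) by (simp add: algebra_simps)
    qed
    show ?thesis
    proof (cases "\<exists>s1\<in>\<tau>. s1$l=0 \<and> s1$k\<noteq>0")
      case True
      then obtain s1 where s1: "s1\<in>\<tau>" "s1$l=0" "s1$k\<noteq>0" by blast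
      have Ml1: "x$l = 1" if x: "x\<in>\<tau>" "x$k\<noteq>0" "x$l\<noteq>0" for x
      proof -
        have "x$k * s1$l - x$l * s1$k \<noteq> 0" using x s1 by simp
        from star[OF x(1) s1(1) this] show ?thesis using x s1 by auto
      qed
      show ?thesis
      proof (cases "\<exists>s2\<in>\<tau>. s2$k=0 \<and> s2$l\<noteq>0")
        case True
        then obtain s2 where s2: "s2\<in>\<tau>" "s2$k=0" "s2$l\<noteq>0" by blast
        have Mk1: "x$k = 1" if x: "x\<in>\<tau>" "x$k\<noteq>0" "x$l\<noteq>0" for x
        proof -
          have "x$k * s2$l - x$l * s2$k \<noteq> 0" using x s2 by simp
          from star[OF x(1) s2(1) this] show ?thesis using x s2 by auto
        qed
        have Ck: "C$k = 1" and Cl: "C$l = 1" using Mk1 Ml1 C by auto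
        have all: "\<forall>x\<in>\<tau>. x\<noteq>C \<longrightarrow> x$k=0 \<or> x$l=0"
        proof (intro ballI impI, rule ccontr)
          fix x assume x: "x\<in>\<tau>" "x\<noteq>C" "\<not> (x$k=0 \<or> x$l=0)"
          have xk: "x$k = 1" and xl: "x$l = 1" using Mk1 Ml1 x by auto
          have X1: "s1$i=0 \<and> s1$j=0"
            using L_X[OF c C(1) x(1) s1(1) x(2)[symmetric]] Ck Cl xk xl s1 by auto
          have X2: "s2$i=0 \<and> s2$j=0"
            using L_X[OF c C(1) x(1) s2(1) x(2)[symmetric]] Ck Cl xk xl s2 by auto
          have e1: "a$k * s1$k = b" using cc(11) s1 X1 by force
          have e2: "a$l * s2$l = b" using cc(11) s2 X2 by force
          have eC: "a$i*C$i + a$j*C$j + a$k + a$l = b" using cc(11) C(1) Ck Cl by force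
          have n1: "a$i*C$i \<ge> 0" "a$j*C$j \<ge> 0" using cc(9,10) C(1)
            by (simp_all add: less_imp_le)
          have "s1$k * s2$l - s1$l * s2$k \<noteq> 0" using s1 s2 by simp
          from star[OF s1(1) s2(1) this] have "s1$k = 1 \<or> s2$l = 1" using s1 s2 by auto
          thus False
          proof
            assume "s1$k = 1" thus False using e1 eC n1 cc(10)[rule_format, of l] by simp
          next
            assume "s2$l = 1" thus False using e2 eC n1 cc(10)[rule_format, of k] by simp
          qed
        qed
        have "is_flat_border \<tau>" unfolding is_flat_border_def
          apply (rule exI[of _ k], rule exI[of _ l], rule exI[of _ C])
          using cc C Ck Cl all by blast
        thus ?thesis by simp
      next
        case False
        hence kl: "\<forall>x\<in>\<tau>. x$k = 0 \<longrightarrow> x$l = 0" by auto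
        have Cl: "C$l = 1" using Ml1 C by auto
        have P: "\<forall>x\<in>\<tau>. x$l\<noteq>0 \<longrightarrow> x$l=1 \<and> x$k=C$k"
        proof (intro ballI impI)
          fix x assume x: "x\<in>\<tau>" "x$l\<noteq>0"
          hence xk: "x$k\<noteq>0" using kl by auto
          have xl: "x$l = 1" using Ml1 x xk by auto
          have "x$k * C$l - x$l * C$k = 0" using M1 x xk by auto
          thus "x$l=1 \<and> x$k=C$k" using xl Cl by simp
        qed
        show ?thesis using L_Y[OF c' s1(1) s1(2) s1(3) _ C(1) C(3) P] C by auto
      qed
    next
      case False
      hence lk: "\<forall>x\<in>\<tau>. x$l = 0 \<longrightarrow> x$k = 0" by auto
      have sl: "s$l \<noteq> 0" using s lk by auto
      have sk: "s$k = 0" using skl sl by auto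
      have Mk: "x$k = 1" if x: "x\<in>\<tau>" "x$k\<noteq>0" for x
      proof -
        have xl: "x$l \<noteq> 0" using lk x by auto
        have "x$k * s$l - x$l * s$k \<noteq> 0" using x sk sl by simp
        from star[OF x(1) s(1) this] show ?thesis using x sk sl xl by auto
      qed
      have Ck: "C$k = 1" using Mk C by auto
      have P: "\<forall>x\<in>\<tau>. x$k\<noteq>0 \<longrightarrow> x$k=1 \<and> x$l=C$l"
      proof (intro ballI impI)
        fix x assume x: "x\<in>\<tau>" "x$k\<noteq>0"
        have xl: "x$l \<noteq> 0" using lk x by auto
        have xk: "x$k = 1" using Mk x by auto
        have "x$k * C$l - x$l * C$k = 0" using M1 x xl by auto
        thus "x$k=1 \<and> x$l=C$l" using xk Ck by simp
      qed
      show ?thesis using L_Y[OF c s(1) sk sl _ C(1) C(2) P] C by auto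
    qed
  next
    case False
    hence M0: "\<forall>x\<in>\<tau>. x$k = 0 \<or> x$l = 0" by auto
    obtain sA sB where sA: "sA\<in>\<tau>" "sA$l=0" "sA$k\<noteq>0" and sB: "sB\<in>\<tau>" "sB$k=0" "sB$l\<noteq>0"
    proof (cases "r0$k = 0")
      case True
      hence "s0$l = 0" "s0$k \<noteq> 0" "r0$l \<noteq> 0" using D0 M0 s0 by auto
      thus ?thesis using that r0 s0 True by blast
    next
      case False
      hence "r0$l = 0" using M0 r0 by auto
      hence "s0$k = 0" "s0$l \<noteq> 0" using D0 M0 s0 by auto
      thus ?thesis using that r0 s0 False \<open>r0$l = 0\<close> by blast
    qed
    show ?thesis
    proof (cases "\<exists>t\<in>\<tau>. t$l\<noteq>0 \<and> t$l\<noteq>1")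
      case True
      then obtain t where t: "t\<in>\<tau>" "t$l\<noteq>0" "t$l\<noteq>1" by blast
      have tk: "t$k = 0" using M0 t by auto
      have P: "\<forall>x\<in>\<tau>. x$k\<noteq>0 \<longrightarrow> x$k=1 \<and> x$l=0"
      proof (intro ballI impI)
        fix x assume x: "x\<in>\<tau>" "x$k\<noteq>0"
        have xl: "x$l = 0" using M0 x by auto
        have "x$k * t$l - x$l * t$k \<noteq> 0" using x t tk xl by simp
        from star[OF x(1) t(1) this] show "x$k=1 \<and> x$l=0" using x t tk xl by auto
      qed
      show ?thesis using L_Y[OF c t(1) tk t(2) _ sA(1) sA(3) P] t by auto
    next
      case False
      hence Bl: "\<forall>x\<in>\<tau>. x$l\<noteq>0 \<longrightarrow> x$l=1" by auto
      show ?thesis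
      proof (cases "\<exists>t\<in>\<tau>. t$k\<noteq>0 \<and> t$k\<noteq>1")
        case True
        then obtain t where t: "t\<in>\<tau>" "t$k\<noteq>0" "t$k\<noteq>1" by blast
        have tl: "t$l = 0" using M0 t by auto
        have P: "\<forall>x\<in>\<tau>. x$l\<noteq>0 \<longrightarrow> x$l=1 \<and> x$k=0"
        proof (intro ballI impI)
          fix x assume x: "x\<in>\<tau>" "x$l\<noteq>0"
          have xk: "x$k = 0" using M0 x by auto
          have "x$k * t$l - x$l * t$k \<noteq> 0" using x t tl xk by simp
          from star[OF x(1) t(1) this] show "x$l=1 \<and> x$k=0" using x t tl xk by auto
        qed
        show ?thesis using L_Y[OF c' t(1) tl t(2) _ sB(1) sB(3) P] t by auto
      next
        case False
        hence Ak: "\<forall>x\<in>\<tau>. x$k\<noteq>0 \<longrightarrow> x$k=1" by auto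
        have "\<forall>x\<in>\<tau>. (x$k, x$l) \<in> {(0,0),(1,0),(0,1)}"
        proof
          fix x assume x: "x\<in>\<tau>"
          show "(x$k, x$l) \<in> {(0,0),(1,0),(0,1)}" using M0 Ak Bl x by (cases "x$k = 0") auto
        qed
        hence "is_B2_facet \<tau>" unfolding is_B2_facet_def using cc(8) by blast
        thus ?thesis by simp
      qed
    qed
  qed
qed


lemma span_coord_zero:
  fixes x :: "real^4" and I :: "4 set"
  assumes "x \<in> span ((\<lambda>i. axis i (1::real)) ` I)" "m \<notin> I"
  shows "x$m = 0"
  using assms(1)
proof (induction rule: span_induct_alt)
  case base
  then show ?case by simp
next
  case (step c x y)
  then show ?case using assms(2) by (auto simp: axis_def split: if_splits)
qed
lemma L_span:
  fixes \<tau> :: "(real^4) set"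
  assumes nn: "\<forall>x\<in>\<tau>. \<forall>m. x$m \<ge> 0" and ap: "\<forall>m. a$m > 0"
    and H: "affine hull \<tau> = {x. a \<bullet> x = b}" and kl: "k \<noteq> l"
  shows "\<exists>r\<in>\<tau>. \<exists>s\<in>\<tau>. r$k * s$l - r$l * s$k \<noteq> 0"
proof (rule ccontr)
  assume A: "\<not> ?thesis"
  obtain wk wl :: real where w: "wk \<ge> 0" "wl \<ge> 0" "wk \<noteq> 0 \<or> wl \<noteq> 0"
      "\<forall>x\<in>\<tau>. x$k * wl - x$l * wk = 0"
  proof (cases "\<exists>r\<in>\<tau>. r$k \<noteq> 0 \<or> r$l \<noteq> 0")
    case True
    then obtain r where r: "r\<in>\<tau>" "r$k \<noteq> 0 \<or> r$l \<noteq> 0" by blast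
    show ?thesis by (rule that[of "r$k" "r$l"]) (use r nn A in auto)
  next
    case False
    show ?thesis by (rule that[of 1 0]) (use False in auto)
  qed
  define c :: "real^4" where "c = wl *\<^sub>R axis k 1 - wk *\<^sub>R axis l 1"
  have cx: "c \<bullet> x = x$k * wl - x$l * wk" for x
    unfolding c_def by (simp add: inner_diff_left inner_axis' mult.commute)
  have "\<tau> \<subseteq> {x. c \<bullet> x = 0}" using w(4) cx by auto
  hence "affine hull \<tau> \<subseteq> {x. c \<bullet> x = 0}" by (rule hull_minimal) (rule affine_hyperplane)
  hence sub: "{x. a \<bullet> x = b} \<subseteq> {x. c \<bullet> x = 0}" using H by simp
  define x0 :: "real^4" where "x0 = (b / a$k) *\<^sub>R axis k 1"
  define d :: "real^4" where "d = a$l *\<^sub>R axis k 1 - a$k *\<^sub>R axis l 1"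
  have ak: "a$k > 0" and al: "a$l > 0" using ap by auto
  have "a \<bullet> x0 = b" unfolding x0_def using ak by (simp add: inner_axis)
  moreover have "a \<bullet> d = 0" unfolding d_def by (simp add: inner_diff_right inner_axis mult.commute)
  ultimately have "a \<bullet> (x0 + d) = b" "a \<bullet> x0 = b" by (simp_all add: inner_add_right)
  hence "c \<bullet> (x0 + d) = 0" "c \<bullet> x0 = 0" using sub by auto
  hence "c \<bullet> d = 0" by (simp add: inner_add_right)
  moreover have "c \<bullet> d = a$l * wl + a$k * wk" unfolding cx d_def using kl by (simp add: axis_def)
  moreover have "a$l * wl + a$k * wk > 0"
  proof -
    have "a$l * wl \<ge> 0" "a$k * wk \<ge> 0" using ak al w by simp_all
    moreover have "a$l * wl > 0 \<or> a$k * wk > 0" using ak al w by auto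
    ultimately show ?thesis by linarith
  qed
  ultimately show False by simp
qed

lemma card_coord:
  "dim (coord_subspace I) = card I"
proof -
  have ind: "independent ((\<lambda>i. axis i (1::real)) ` I)"
    by (rule independent_mono[OF independent_Basis]) (auto simp: Basis_vec_def)
  have "card ((\<lambda>i. axis i (1::real)) ` I) = card I"
    by (rule card_image) (auto simp: inj_on_def axis_eq_axis)
  thus ?thesis using indep_card_eq_dim_span[OF ind] unfolding coord_subspace_def by simp
qed

theorem lemma2p8:
  fixes \<tau> F :: "(real ^ 4) set"
  assumes "is_B_facet \<tau>"
    and "is_V_face \<tau> F" and "aff_dim F = 1" and "\<not> is_B_face \<tau> F"
  shows "is_B1_facet \<tau> \<or> is_B2_facet \<tau> \<or> is_flat_border \<tau>"
proof -
  obtain a b where ap: "\<forall>m. a$m > 0" and H: "affine hull \<tau> = {x. a \<bullet> x = b}"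
    and lat: "\<forall>x\<in>\<tau>. lattice_nonneg x"
    and BS: "\<forall>S. S \<subseteq> \<tau> \<and> is_simplex 3 S \<longrightarrow> is_B_simplex_on UNIV 3 S"
    using assms(1) unfolding is_B_facet_def by blast
  have nn: "\<forall>x\<in>\<tau>. \<forall>m. x$m \<ge> 0" using lat unfolding lattice_nonneg_def by blast
  have hyp: "a \<bullet> x = b" if "x \<in> \<tau>" for x
    using hull_inc[of x \<tau> affine] that H by auto
  obtain I where V: "V_face_wrt \<tau> F I" using assms(2) unfolding is_V_face_def by blast
  have Ft: "F \<subseteq> \<tau>" using V unfolding V_face_wrt_def face_of_set_def by blast
  have FI: "F \<subseteq> coord_subspace I" using V unfolding V_face_wrt_def by blast
  have "int (dim (coord_subspace I)) = 2" using V assms(3) unfolding V_face_wrt_def by simp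
  hence "card I = 2" using card_coord[of I] by simp
  then obtain i j where ij: "I = {i,j}" "i \<noteq> j" by (meson card_2_iff)
  have "card (UNIV - {i,j}) = 2"
    using ij by (simp add: card_Diff_subset)
  then obtain k l where kl: "UNIV - {i,j} = {k,l}" "k \<noteq> l" by (meson card_2_iff)
  have dist: "i\<noteq>k" "i\<noteq>l" "j\<noteq>k" "j\<noteq>l" using kl by (auto simp: set_eq_iff)
  have Fz: "x$k = 0 \<and> x$l = 0" if "x \<in> F" for x
  proof -
    have "x \<in> span ((\<lambda>i. axis i (1::real)) ` I)" using FI that unfolding coord_subspace_def by blast
    moreover have "k \<notin> I" "l \<notin> I" using ij dist by auto
    ultimately show ?thesis using span_coord_zero by blast
  qed
  have na: "nat (aff_dim F) = 1" using assms(3) by simp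
  obtain S where S: "S \<subseteq> F" "is_simplex 1 S" "\<not> is_B_simplex_on I 1 S"
    using assms(4) V na unfolding is_B_face_def by auto
  obtain p q where pq: "S = {p,q}" "p \<noteq> q"
    using S(2) unfolding is_simplex_def by (metis card_2_iff one_add_one)
  have notB: "\<forall>m\<in>{i,j}. \<not>(p$m=1 \<and> q$m=0) \<and> \<not>(p$m=0 \<and> q$m=1)"
    using S(2,3) pq ij unfolding is_B_simplex_on_def by auto
  have pF: "p \<in> F" "q \<in> F" using S(1) pq by auto
  have sumeq: "a \<bullet> x = a$i*x$i + a$j*x$j + a$k*x$k + a$l*x$l" for x :: "real^4"
  proof -
    have U: "(UNIV::4 set) = {i,j,k,l}" using univ4 ij(2) dist kl(2) by blast
    show ?thesis unfolding inner_vec_def U using ij(2) dist kl(2) by (simp add: algebra_simps)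
  qed
  have c: "cfg \<tau> a b i j k l p q"
    unfolding cfg_def using ij(2) dist kl(2) nn ap hyp sumeq BS pF Ft Fz pq(2) notB by auto
  obtain r0 s0 where "r0\<in>\<tau>" "s0\<in>\<tau>" "r0$k * s0$l - r0$l * s0$k \<noteq> 0"
    using L_span[OF nn ap H kl(2)] by blast
  thus ?thesis using L_core[OF c] by blast
qed

end
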